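(* Assume condition (S). Let $\Phi_n=(\phi_n,(\phi_n)'_1)$, $n\ge1$, be normalized eigenelements of $K$ as in the expansion theorem, with each $\phi_n$ real-valued. Then $$\sum_{n=1}^{\infty}\big[(\phi_n)'_1\big]^2=\frac{\rho}{p(1)}\qquad\text{and}\qquad\sum_{n=1}^{\infty}(\phi_n)'_1\,\phi_n(x)=0,$$ the second series converging to $0$ in $L_2([-1,1],r)$.
   Context: Fix $-1<h_1<h_2<1$ and put $\Omega:=[-1,h_1)\cup(h_1,h_2)\cup(h_2,1]$. Let $r,p,q$ be real-valued functions such that $r,p,p',q$ are continuous on each of $[-1,h_1)$, $(h_1,h_2)$, $(h_2,1]$ and have finite one-sided limits at $h_1$ and $h_2$ (denoted $f(h\pm 0)$), with $r(x)>0$, $p(x)>0$ on $\Omega$. Let $\alpha_1,\alpha_2,\beta_1,\beta_2,\gamma_j,\delta_j$ ($j=1,\dots,4$) be real numbers with $|\beta_1|+|\beta_2|\neq0$, all $\gamma_j\neq0$, $\delta_j\neq0$, and $\rho:=\alpha_1\beta_2-\alpha_2\beta_1>0$. Condition (S): $\delta_1\delta_2\,p(h_1-0)=\gamma_1\gamma_2\,p(h_1+0)$ and $\delta_3\delta_4\,p(h_2-0)=\gamma_3\gamma_4\,p(h_2+0)$. Put $\ell u:=\frac{1}{r(x)}\{-(p(x)u')'+q(x)u\}$, and for a function $u$ set $(u)_1:=\beta_1u(1)-\beta_2u'(1)$, $(u)'_1:=\alpha_1u(1)-\alpha_2u'(1)$. Let $H=L_2[-1,1]\oplus\mathbb{C}$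 with inner product $\langle T,G\rangle:=\int_{-1}^{1}T_1\overline{G_1}r\,dx+\frac{p(1)}{\rho}T_2\overline{G_2}$. The operator $K$ has domain $D(K)$ of those $T=(T_1,T_2)\in H$ with $T_1,T_1'$ absolutely continuous on each of the three subintervals, finite limits $T_1(h_i\pm0),T_1'(h_i\pm0)$, $\ell T_1\in L_2[-1,1]$, $T_1(-1)=0$, $\gamma_1T_1(h_1-0)=\delta_1T_1(h_1+0)$, $\gamma_2T_1'(h_1-0)=\delta_2T_1'(h_1+0)$, $\gamma_3T_1(h_2-0)=\delta_3T_1(h_2+0)$, $\gamma_4T_1'(h_2-0)=\delta_4T_1'(h_2+0)$, and $T_2=(T_1)'_1$; $KT:=(\ell T_1,-(T_1)_1)$. Under (S), $K$ has real eigenvalues $\lambda_1\le\lambda_2\le\cdots$ (with multiplicity) and eigenelements $\Phi_n=(\phi_n,(\phi_n)'_1)$, $\|\Phi_n\|_H=1$, such that $T=\sum_n\langle T,\Phi_n\rangle\Phi_n$ in $H$ for every $T\in H$. *)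

theory Defs
  imports "HOL-Analysis.Analysis"
begin

definition piece :: "real \<Rightarrow> real \<Rightarrow> real \<Rightarrow> real set" where
  "piece h1 h2 x = (if x < h1 then {-1..<h1} else if x < h2 then {h1<..<h2} else {h2<..1})"

definition Omega :: "real \<Rightarrow> real \<Rightarrow> real set" where
  "Omega h1 h2 = {-1..<h1} \<union> {h1<..<h2} \<union> {h2<..1}"

definition lft :: "(real \<Rightarrow> 'a::t2_space) \<Rightarrow> real \<Rightarrow> 'a" where
  "lft f h = Lim (at_left h) f"

definition rgt :: "(real \<Rightarrow> 'a::t2_space) \<Rightarrow> real \<Rightarrow> 'a" where
  "rgt f h = Lim (at_right h) f"

definition has_one_sided_limits :: "real \<Rightarrow> real \<Rightarrow> (real \<Rightarrow> 'a::topological_space) \<Rightarrow> bool" where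
  "has_one_sided_limits h1 h2 f \<longleftrightarrow>
     (\<exists>L. (f \<longlongrightarrow> L) (at_left h1)) \<and> (\<exists>L. (f \<longlongrightarrow> L) (at_right h1)) \<and>
     (\<exists>L. (f \<longlongrightarrow> L) (at_left h2)) \<and> (\<exists>L. (f \<longlongrightarrow> L) (at_right h2))"

definition pw_cont :: "real \<Rightarrow> real \<Rightarrow> (real \<Rightarrow> real) \<Rightarrow> bool" where
  "pw_cont h1 h2 f \<longleftrightarrow>
     continuous_on {-1..<h1} f \<and> continuous_on {h1<..<h2} f \<and> continuous_on {h2<..1} f \<and>
     has_one_sided_limits h1 h2 f"

definition abs_cont_on :: "real set \<Rightarrow> (real \<Rightarrow> 'a::real_normed_vector) \<Rightarrow> bool" where
  "abs_cont_on S f \<longleftrightarrow>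
     (\<forall>e>0. \<exists>d>0. \<forall>(n::nat) (a::nat \<Rightarrow> real) b.
        (\<forall>i<n. a i \<le> b i \<and> {a i..b i} \<subseteq> S) \<and>
        (\<forall>i<n. \<forall>j<n. i \<noteq> j \<longrightarrow> b i \<le> a j \<or> b j \<le> a i) \<and>
        (\<Sum>i<n. b i - a i) < d
        \<longrightarrow> (\<Sum>i<n. norm (f (b i) - f (a i))) < e)"

definition pw_abs_cont :: "real \<Rightarrow> real \<Rightarrow> (real \<Rightarrow> 'a::real_normed_vector) \<Rightarrow> bool" where
  "pw_abs_cont h1 h2 f \<longleftrightarrow>
     abs_cont_on {-1..<h1} f \<and> abs_cont_on {h1<..<h2} f \<and> abs_cont_on {h2<..1} f"

definition dv :: "real \<Rightarrow> real \<Rightarrow> (real \<Rightarrow> complex) \<Rightarrow> real \<Rightarrow> complex" where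
  "dv h1 h2 u x = vector_derivative u (at x within piece h1 h2 x)"

definition bc :: "real \<Rightarrow> real \<Rightarrow> real \<Rightarrow> real \<Rightarrow> (real \<Rightarrow> complex) \<Rightarrow> complex" where
  "bc h1 h2 b1 b2 u = of_real b1 * u 1 - of_real b2 * dv h1 h2 u 1"

definition bc' :: "real \<Rightarrow> real \<Rightarrow> real \<Rightarrow> real \<Rightarrow> (real \<Rightarrow> complex) \<Rightarrow> complex" where
  "bc' h1 h2 a1 a2 u = of_real a1 * u 1 - of_real a2 * dv h1 h2 u 1"

definition inL2 :: "(real \<Rightarrow> real) \<Rightarrow> (real \<Rightarrow> complex) \<Rightarrow> bool" where
  "inL2 r u \<longleftrightarrow> set_borel_measurable lebesgue {-1..1} u \<and>
     set_integrable lebesgue {-1..1} (\<lambda>x. r x * (cmod (u x))\<^sup>2)"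

definition l2norm :: "(real \<Rightarrow> real) \<Rightarrow> (real \<Rightarrow> complex) \<Rightarrow> real" where
  "l2norm r u = sqrt (LINT x:{-1..1}|lebesgue. r x * (cmod (u x))\<^sup>2)"

definition inH :: "(real \<Rightarrow> real) \<Rightarrow> (real \<Rightarrow> complex) \<times> complex \<Rightarrow> bool" where
  "inH r T \<longleftrightarrow> inL2 r (fst T)"

definition hinner :: "(real \<Rightarrow> real) \<Rightarrow> (real \<Rightarrow> real) \<Rightarrow> real \<Rightarrow>
    (real \<Rightarrow> complex) \<times> complex \<Rightarrow> (real \<Rightarrow> complex) \<times> complex \<Rightarrow> complex" where
  "hinner r p rho T G =
     (LINT x:{-1..1}|lebesgue. fst T x * cnj (fst G x) * of_real (r x))
     + of_real (p 1 / rho) * snd T * cnj (snd G)"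

definition hnorm :: "(real \<Rightarrow> real) \<Rightarrow> (real \<Rightarrow> real) \<Rightarrow> real \<Rightarrow>
    (real \<Rightarrow> complex) \<times> complex \<Rightarrow> real" where
  "hnorm r p rho T = sqrt (Re (hinner r p rho T T))"

text \<open>"l u = v" (a.e. on [-1,1]), where l u = (1/r)(-(p u')' + q u).\<close>

definition ell_eq :: "real \<Rightarrow> real \<Rightarrow> (real \<Rightarrow> real) \<Rightarrow> (real \<Rightarrow> real) \<Rightarrow> (real \<Rightarrow> real) \<Rightarrow>
    (real \<Rightarrow> complex) \<Rightarrow> (real \<Rightarrow> complex) \<Rightarrow> bool" where
  "ell_eq h1 h2 r p q u v \<longleftrightarrow>
     (AE x in lebesgue. x \<in> {-1..1} \<longrightarrow>
        ((\<lambda>y. of_real (p y) * dv h1 h2 u y) has_vector_derivative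
           (of_real (q x) * u x - of_real (r x) * v x)) (at x))"

definition inDomK :: "real \<Rightarrow> real \<Rightarrow> (real \<Rightarrow> real) \<Rightarrow> (real \<Rightarrow> real) \<Rightarrow> (real \<Rightarrow> real) \<Rightarrow>
    real \<Rightarrow> real \<Rightarrow> (nat \<Rightarrow> real) \<Rightarrow> (nat \<Rightarrow> real) \<Rightarrow> (real \<Rightarrow> complex) \<times> complex \<Rightarrow> bool" where
  "inDomK h1 h2 r p q a1 a2 \<gamma> \<delta> T \<longleftrightarrow>
     (let T1 = fst T; T1' = dv h1 h2 T1 in
       inH r T \<and>
       (\<exists>D. (\<forall>x\<in>Omega h1 h2. (T1 has_vector_derivative D x) (at x within piece h1 h2 x)) \<and>
            pw_abs_cont h1 h2 T1 \<and> pw_abs_cont h1 h2 D) \<and>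
       has_one_sided_limits h1 h2 T1 \<and> has_one_sided_limits h1 h2 T1' \<and>
       (\<exists>v. inL2 r v \<and> ell_eq h1 h2 r p q T1 v) \<and>
       T1 (-1) = 0 \<and>
       of_real (\<gamma> 1) * lft T1 h1 = of_real (\<delta> 1) * rgt T1 h1 \<and>
       of_real (\<gamma> 2) * lft T1' h1 = of_real (\<delta> 2) * rgt T1' h1 \<and>
       of_real (\<gamma> 3) * lft T1 h2 = of_real (\<delta> 3) * rgt T1 h2 \<and>
       of_real (\<gamma> 4) * lft T1' h2 = of_real (\<delta> 4) * rgt T1' h2 \<and>
       snd T = bc' h1 h2 a1 a2 T1)"

end

theory Submission
  imports Defs
begin


lemma real_deriv_at1:
  fixes f :: "real \<Rightarrow> complex"
  assumes "\<forall>x\<in>{h2<..1}. f x \<in> \<real>" "(f has_vector_derivative D) (at 1 within {h2<..1})" "h2 < (1::real)"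
  shows "vector_derivative f (at 1 within {h2<..1}) = D \<and> cnj D = D"
proof -
  have nb: "at 1 within {h2<..1} \<noteq> bot"
    using assms(3) by (simp add: trivial_limit_within)
  have c: "((\<lambda>x. cnj (f x)) has_vector_derivative cnj D) (at 1 within {h2<..1})"
    using assms(2) by (rule has_vector_derivative_cnj)
  have "(f has_vector_derivative cnj D) (at 1 within {h2<..1})"
  proof (rule has_vector_derivative_transform_within[OF c, of 1])
    show "(0::real) < 1" by simp
    show "(1::real) \<in> {h2<..1}" using assms(3) by simp
    fix x' assume "x' \<in> {h2<..1}"
    then have "f x' \<in> \<real>" using assms(1) by blast
    then show "cnj (f x') = f x'" using Reals_cnj_iff by blast
  qed
  then have "D = cnj D" by (rule vector_derivative_unique_within[OF nb assms(2)])
  moreover have "vector_derivative f (at 1 within {h2<..1}) = D"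
    by (rule vector_derivative_within[OF nb assms(2)])
  ultimately show ?thesis by (metis)
qed

lemma lint_cnj:
  fixes f :: "real \<Rightarrow> complex"
  shows "(LINT x:S|M. f x * cnj (f x) * of_real (r x)) = of_real (LINT x:S|M. r x * (cmod (f x))\<^sup>2)"
proof -
  have "\<And>x. f x * cnj (f x) * of_real (r x) = complex_of_real (r x * (cmod (f x))\<^sup>2)"
  proof -
    fix x
    have "f x * cnj (f x) = complex_of_real ((cmod (f x))\<^sup>2)"
      by (metis complex_norm_square of_real_power)
    then show "f x * cnj (f x) * of_real (r x) = complex_of_real (r x * (cmod (f x))\<^sup>2)"
      by (simp add: mult.commute)
  qed
  then have "(\<lambda>x. f x * cnj (f x) * of_real (r x)) = (\<lambda>x. complex_of_real (r x * (cmod (f x))\<^sup>2))"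
    by (rule ext)
  then show ?thesis by (simp only: set_integral_complex_of_real)
qed

theorem corollary4p2:
  fixes h1 h2 :: real
    and r p pd q :: "real \<Rightarrow> real"
    and a1 a2 b1 b2 rho :: real
    and \<gamma> \<delta> :: "nat \<Rightarrow> real"
    and lam :: "nat \<Rightarrow> real"
    and \<phi> :: "nat \<Rightarrow> real \<Rightarrow> complex"
  assumes h: "-1 < h1" "h1 < h2" "h2 < 1"
    and reg: "pw_cont h1 h2 r" "pw_cont h1 h2 p" "pw_cont h1 h2 pd" "pw_cont h1 h2 q"
    and pd: "\<forall>x\<in>Omega h1 h2. (p has_real_derivative pd x) (at x within piece h1 h2 x)"
    and pos: "\<forall>x\<in>Omega h1 h2. r x > 0 \<and> p x > 0"
    and beta: "\<bar>b1\<bar> + \<bar>b2\<bar> \<noteq> 0"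
    and gd: "\<forall>j\<in>{1..4}. \<gamma> j \<noteq> 0 \<and> \<delta> j \<noteq> 0"
    and rho: "rho = a1 * b2 - a2 * b1" "rho > 0"
    and S: "\<delta> 1 * \<delta> 2 * lft p h1 = \<gamma> 1 * \<gamma> 2 * rgt p h1"
           "\<delta> 3 * \<delta> 4 * lft p h2 = \<gamma> 3 * \<gamma> 4 * rgt p h2"
    and eig_mono: "incseq lam"
    and dom: "\<forall>n. inDomK h1 h2 r p q a1 a2 \<gamma> \<delta> (\<phi> n, bc' h1 h2 a1 a2 (\<phi> n))"
    and eig1: "\<forall>n. ell_eq h1 h2 r p q (\<phi> n) (\<lambda>x. of_real (lam n) * \<phi> n x)"
    and eig2: "\<forall>n. - bc h1 h2 b1 b2 (\<phi> n) = of_real (lam n) * bc' h1 h2 a1 a2 (\<phi> n)"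
    and normed: "\<forall>n. hnorm r p rho (\<phi> n, bc' h1 h2 a1 a2 (\<phi> n)) = 1"
    and expansion: "\<forall>T. inH r T \<longrightarrow>
        (\<lambda>N. hnorm r p rho
           (\<lambda>x. fst T x - (\<Sum>n<N. hinner r p rho T (\<phi> n, bc' h1 h2 a1 a2 (\<phi> n)) * \<phi> n x),
            snd T - (\<Sum>n<N. hinner r p rho T (\<phi> n, bc' h1 h2 a1 a2 (\<phi> n)) * bc' h1 h2 a1 a2 (\<phi> n))))
        \<longlonglongrightarrow> 0"
    and real_valued: "\<forall>n. \<forall>x\<in>{-1..1}. \<phi> n x \<in> \<real>"
  shows "(\<lambda>n. (bc' h1 h2 a1 a2 (\<phi> n))\<^sup>2) sums complex_of_real (rho / p 1)
         \<and> (\<lambda>N. l2norm r (\<lambda>x. \<Sum>n<N. bc' h1 h2 a1 a2 (\<phi> n) * \<phi> n x)) \<longlonglongrightarrow> 0"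
proof -
  define c where "c n = bc' h1 h2 a1 a2 (\<phi> n)" for n
  define T0 :: "(real \<Rightarrow> complex) \<times> complex" where "T0 = (\<lambda>x. 0, 1)"
  define k where "k = p 1 / rho"
  define u where "u N x = (\<Sum>n<N. c n * \<phi> n x)" for N x
  define s where "s N = (\<Sum>n<N. (c n)\<^sup>2)" for N
  define L where "L N = (LINT x:{-1..1}|lebesgue. r x * (cmod (u N x))\<^sup>2)" for N
  define G where "G N = 1 - of_real k * s N" for N
  have om1: "1 \<in> Omega h1 h2" using h by (simp add: Omega_def)
  have p1: "p 1 > 0" using pos om1 by auto
  have k: "k > 0" using p1 rho by (simp add: k_def)
  have piece1: "piece h1 h2 1 = {h2<..1}" using h by (simp add: piece_def)
  have creal: "cnj (c n) = c n" for n
  proof -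
    from dom obtain D where D: "\<forall>x\<in>Omega h1 h2. (\<phi> n has_vector_derivative D x) (at x within piece h1 h2 x)"
      unfolding inDomK_def Let_def by auto
    have "(\<phi> n has_vector_derivative D 1) (at 1 within {h2<..1})" using D om1 piece1 by auto
    moreover have "\<forall>x\<in>{h2<..1}. \<phi> n x \<in> \<real>" using real_valued h by auto
    ultimately have "dv h1 h2 (\<phi> n) 1 = D 1 \<and> cnj (D 1) = D 1"
      using real_deriv_at1[of h2 "\<phi> n" "D 1"] h piece1 by (simp add: dv_def)
    moreover have "\<phi> n 1 \<in> \<real>" using real_valued by auto
    ultimately show ?thesis by (auto simp: c_def bc'_def Reals_cnj_iff)
  qed
  have inH0: "inH r T0" by (simp add: T0_def inH_def inL2_def set_borel_measurable_def)
  have fT0: "fst T0 = (\<lambda>x. 0)" and sT0: "snd T0 = 1" by (simp_all add: T0_def)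
  have hin: "hinner r p rho T0 (\<phi> n, c n) = of_real k * c n" for n
    by (simp add: T0_def hinner_def k_def creal)
  have E0: "(\<lambda>N. hnorm r p rho
           (\<lambda>x. fst T0 x - (\<Sum>n<N. hinner r p rho T0 (\<phi> n, c n) * \<phi> n x),
            snd T0 - (\<Sum>n<N. hinner r p rho T0 (\<phi> n, c n) * c n)))
        \<longlonglongrightarrow> 0"
    unfolding c_def by (rule mp[OF spec[OF expansion] inH0])
  have hn: "hnorm r p rho (\<lambda>x. fst T0 x - (\<Sum>n<N. hinner r p rho T0 (\<phi> n, c n) * \<phi> n x),
            snd T0 - (\<Sum>n<N. hinner r p rho T0 (\<phi> n, c n) * c n))
      = sqrt (k\<^sup>2 * L N + k * (cmod (G N))\<^sup>2)" for N
  proof -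
    have F: "(\<lambda>x. fst T0 x - (\<Sum>n<N. hinner r p rho T0 (\<phi> n, c n) * \<phi> n x))
        = (\<lambda>x. - (of_real k * u N x))"
      by (simp add: hin u_def sum_distrib_left mult.assoc fT0)
    have Gs: "snd T0 - (\<Sum>n<N. hinner r p rho T0 (\<phi> n, c n) * c n) = G N"
      by (simp add: sT0 hin G_def s_def sum_distrib_left mult.assoc power2_eq_square)
    have I: "Re (LINT x:{-1..1}|lebesgue. (- (of_real k * u N x)) * cnj (- (of_real k * u N x)) * of_real (r x))
        = k\<^sup>2 * L N"
    proof -
      have "\<And>x. r x * (cmod (- (of_real k * u N x)))\<^sup>2 = k\<^sup>2 * (r x * (cmod (u N x))\<^sup>2)"
        using k by (simp add: norm_mult power_mult_distrib)
      then show ?thesis by (simp only: lint_cnj Re_complex_of_real L_def set_integral_mult_right)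
    qed
    have J: "Re (of_real (p 1 / rho) * G N * cnj (G N)) = k * (cmod (G N))\<^sup>2"
    proof -
      have "G N * cnj (G N) = complex_of_real ((cmod (G N))\<^sup>2)"
        by (metis complex_norm_square of_real_power)
      then show ?thesis by (simp only: k_def mult.assoc Re_complex_of_real flip: of_real_mult)
    qed
    have HH: "hnorm r p rho (\<lambda>x. - (of_real k * u N x), G N) = sqrt (k\<^sup>2 * L N + k * (cmod (G N))\<^sup>2)"
      unfolding hnorm_def hinner_def fst_conv snd_conv
      by (simp only: plus_complex.sel(1) I J)
    show ?thesis unfolding F Gs by (rule HH)
  qed
  have Lnn: "L N \<ge> 0" for N
  proof -
    have null: "{h1, h2} \<in> null_sets lebesgue" by simp
    show ?thesis unfolding L_def set_lebesgue_integral_def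
    proof (rule integral_nonneg_AE, rule eventually_mono[OF AE_not_in[OF null]])
      fix x :: real assume x: "x \<notin> {h1,h2}"
      show "0 \<le> indicator {-1..1} x *\<^sub>R (r x * (cmod (u N x))\<^sup>2)"
      proof (cases "x \<in> {-1..1}")
        case True
        then have "x \<in> Omega h1 h2" using x by (auto simp: Omega_def)
        then have "r x > 0" using pos by auto
        then show ?thesis using True by simp
      qed simp
    qed
  qed
  define H where "H N = sqrt (k\<^sup>2 * L N + k * (cmod (G N))\<^sup>2)" for N
  have HL: "H \<longlonglongrightarrow> 0" using E0 by (simp only: hn H_def[symmetric])
  have b1: "norm (l2norm r (u N)) \<le> H N / k" for N
  proof -
    have "sqrt (L N) * k = sqrt (k\<^sup>2 * L N)" using k by (simp add: real_sqrt_mult)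
    also have "\<dots> \<le> H N" unfolding H_def using k by (intro real_sqrt_le_mono) simp
    finally have "sqrt (L N) * k \<le> H N" .
    moreover have "l2norm r (u N) = sqrt (L N)" unfolding l2norm_def L_def by (rule refl)
    ultimately show ?thesis using k Lnn
      by (simp add: pos_le_divide_eq)
  qed
  have b2: "norm (G N) \<le> H N / sqrt k" for N
  proof -
    have "cmod (G N) * sqrt k = sqrt (k * (cmod (G N))\<^sup>2)" using k by (simp add: real_sqrt_mult mult.commute)
    also have "\<dots> \<le> H N" unfolding H_def using k Lnn
      by (intro real_sqrt_le_mono) simp
    finally show ?thesis using k by (simp add: pos_le_divide_eq)
  qed
  have l2: "(\<lambda>N. l2norm r (u N)) \<longlonglongrightarrow> 0"
    by (rule Lim_null_comparison[OF always_eventually[OF allI[OF b1]]])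
       (rule tendsto_divide_zero[OF HL])
  have G0: "G \<longlonglongrightarrow> 0"
    by (rule Lim_null_comparison[OF always_eventually[OF allI[OF b2]]])
       (rule tendsto_divide_zero[OF HL])
  have "(\<lambda>N. (1 - G N) / of_real k) \<longlonglongrightarrow> (1 - 0) / of_real k"
    using k by (intro tendsto_intros G0) simp
  moreover have "(\<lambda>N. (1 - G N) / of_real k) = s" using k by (auto simp: G_def)
  ultimately have "s \<longlonglongrightarrow> complex_of_real (rho / p 1)" by (simp add: k_def)
  then have S1: "(\<lambda>n. (c n)\<^sup>2) sums complex_of_real (rho / p 1)"
  proof -
    have "s = (\<lambda>N. \<Sum>n<N. (c n)\<^sup>2)" by (rule ext) (simp add: s_def)
    with \<open>s \<longlonglongrightarrow> complex_of_real (rho / p 1)\<close> show ?thesis by (simp add: sums_def)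
  qed
  have eq1: "(\<lambda>n. (c n)\<^sup>2) = (\<lambda>n. (bc' h1 h2 a1 a2 (\<phi> n))\<^sup>2)"
    by (rule ext) (simp only: c_def)
  have eq2: "(\<lambda>N. l2norm r (u N)) = (\<lambda>N. l2norm r (\<lambda>x. \<Sum>n<N. bc' h1 h2 a1 a2 (\<phi> n) * \<phi> n x))"
  proof (rule ext)
    fix N
    have "u N = (\<lambda>x. \<Sum>n<N. bc' h1 h2 a1 a2 (\<phi> n) * \<phi> n x)"
      by (rule ext) (simp only: u_def c_def)
    then show "l2norm r (u N) = l2norm r (\<lambda>x. \<Sum>n<N. bc' h1 h2 a1 a2 (\<phi> n) * \<phi> n x)" by simp
  qed
  have F1: "(\<lambda>n. (bc' h1 h2 a1 a2 (\<phi> n))\<^sup>2) sums complex_of_real (rho / p 1)"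
    using subst[where P="\<lambda>f. f sums complex_of_real (rho / p 1)", OF eq1 S1] .
  have F2: "(\<lambda>N. l2norm r (\<lambda>x. \<Sum>n<N. bc' h1 h2 a1 a2 (\<phi> n) * \<phi> n x)) \<longlonglongrightarrow> 0"
    using subst[where P="\<lambda>f. f \<longlonglongrightarrow> 0", OF eq2 l2] .
  show ?thesis using F1 F2 by (rule conjI)
qed

end
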